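(* Let a nondegenerate triangle with circumradius $R$ be circumscribed about an ellipse with linear eccentricity $c$ whose center coincides with the circumcenter of the triangle. Then the triangle is acute if and only if $R>c$, and it is obtuse if and only if $R<c$.
   Context: The linear eccentricity of an ellipse is half the distance between its foci. A triangle is circumscribed about a conic if each of its three sidelines is tangent to the conic. *)

theory Defs
  imports "HOL-Analysis.Analysis"
begin

type_synonym point = "real^2"

text \<open>Ellipse given by its foci F1, F2 and semi-major axis a (sum of focal distances 2a);
  it is a genuine (nondegenerate) ellipse iff dist F1 F2 < 2a; F1 = F2 gives a circle.\<close>
definition ellipse :: "point \<Rightarrow> point \<Rightarrow> real \<Rightarrow> point set" where
  "ellipse F1 F2 a = {P. dist P F1 + dist P F2 = 2 * a}"

definition ellipse_center :: "point \<Rightarrow> point \<Rightarrow> point" where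
  "ellipse_center F1 F2 = midpoint F1 F2"

definition linear_eccentricity :: "point \<Rightarrow> point \<Rightarrow> real" where
  "linear_eccentricity F1 F2 = dist F1 F2 / 2"

definition line_through :: "point \<Rightarrow> point \<Rightarrow> point set" where
  "line_through P Q = {P + t *\<^sub>R (Q - P) | t. True}"

definition tangent_line :: "point set \<Rightarrow> point set \<Rightarrow> bool" where
  "tangent_line L E \<longleftrightarrow> (\<exists>!P. P \<in> L \<and> P \<in> E)"

definition nondegenerate_triangle :: "point \<Rightarrow> point \<Rightarrow> point \<Rightarrow> bool" where
  "nondegenerate_triangle A B C \<longleftrightarrow> \<not> collinear {A, B, C}"

definition circumscribed_about :: "point \<Rightarrow> point \<Rightarrow> point \<Rightarrow> point set \<Rightarrow> bool" where
  "circumscribed_about A B C E \<longleftrightarrow>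
     tangent_line (line_through A B) E \<and> tangent_line (line_through B C) E \<and>
     tangent_line (line_through C A) E"

definition is_circumcenter :: "point \<Rightarrow> point \<Rightarrow> point \<Rightarrow> point \<Rightarrow> bool" where
  "is_circumcenter Oc A B C \<longleftrightarrow> dist Oc A = dist Oc B \<and> dist Oc B = dist Oc C"

definition vertex_angle :: "point \<Rightarrow> point \<Rightarrow> point \<Rightarrow> real" where
  "vertex_angle A B C = arccos (((A - B) \<bullet> (C - B)) / (norm (A - B) * norm (C - B)))"

definition acute_triangle :: "point \<Rightarrow> point \<Rightarrow> point \<Rightarrow> bool" where
  "acute_triangle A B C \<longleftrightarrow>
     vertex_angle B A C < pi / 2 \<and> vertex_angle A B C < pi / 2 \<and> vertex_angle A C B < pi / 2"

definition obtuse_triangle :: "point \<Rightarrow> point \<Rightarrow> point \<Rightarrow> bool" where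
  "obtuse_triangle A B C \<longleftrightarrow>
     vertex_angle B A C > pi / 2 \<or> vertex_angle A B C > pi / 2 \<or> vertex_angle A C B > pi / 2"

end

theory Submission
  imports Defs
begin


lemma pos_half: "2 * (z::real) = w \<Longrightarrow> 0 < w \<Longrightarrow> 0 < z" by linarith

lemma E_of_T:
  fixes x1 y1 x2 y2 r p q a :: real
  assumes c1: "x1^2+y1^2 = r" and c2: "x2^2+y2^2 = r"
    and T: "(x1 * x1+y1 * y1) * ((x2-x1) * (x2-x1)+(y2-y1) * (y2-y1)) - (x1 * (x2-x1)+y1 * (y2-y1))^2
            = a * a * ((x2-x1) * (x2-x1)+(y2-y1) * (y2-y1)) - ((x2-x1) * p+(y2-y1) * q)^2"
    and ne: "(x1,y1) \<noteq> (x2,y2)"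
  shows "r * (x1 * x2+y1 * y2)-((p * p-q * q) * (x1 * x2-y1 * y2)+2 * p * q * (x1 * y2+y1 * x2))-r * (2 * a * a-(p * p+q * q)-r) = 0"
proof -
  have id: "(r-(x1 * x2+y1 * y2)) * (r * (x1 * x2+y1 * y2)-((p * p-q * q) * (x1 * x2-y1 * y2)+2 * p * q * (x1 * y2+y1 * x2))-r * (2 * a * a-(p * p+q * q)-r))
     - r * (((x1 * x1+y1 * y1) * ((x2-x1) * (x2-x1)+(y2-y1) * (y2-y1)) - (x1 * (x2-x1)+y1 * (y2-y1))^2)
            - (a * a * ((x2-x1) * (x2-x1)+(y2-y1) * (y2-y1)) - ((x2-x1) * p+(y2-y1) * q)^2))
     = (r * a^2 - r * p^2 - y2^2 * r + 2 * x2 * y2 * p * q - x2^2 * q^2 + x2^2 * p^2 - x2^2 * r) * (x1^2+y1^2-r)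
       + (r * a^2 - r * q^2 - r^2 + y1^2 * q^2 - y1^2 * p^2 + 2 * x1 * y1 * p * q) * (x2^2+y2^2-r)"
    by (simp add: algebra_simps power2_eq_square)
  have h1: "x1^2+y1^2-r = 0" using c1 by simp
  have h2: "x2^2+y2^2-r = 0" using c2 by simp
  have prod: "(r-(x1 * x2+y1 * y2)) * (r * (x1 * x2+y1 * y2)-((p * p-q * q) * (x1 * x2-y1 * y2)+2 * p * q * (x1 * y2+y1 * x2))-r * (2 * a * a-(p * p+q * q)-r)) = 0"
    using id T h1 h2 by simp
  have "2 * (r-(x1 * x2+y1 * y2)) = (x1-x2)^2+(y1-y2)^2"
    using c1 c2 by (simp add: algebra_simps power2_eq_square)
  moreover have "(x1-x2)^2+(y1-y2)^2 > 0"
    using ne by (metis prod.inject add_nonneg_pos add_pos_nonneg eq_iff_diff_eq_0 order_le_less zero_less_power2 zero_le_power2)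
  ultimately have "r-(x1 * x2+y1 * y2) > 0" by (rule pos_half)
  with prod show ?thesis by simp
qed

lemma core:
  fixes x1 y1 x2 y2 x3 y3 r p q a :: real
  assumes c1: "x1^2+y1^2 = r" and c2: "x2^2+y2^2 = r" and c3: "x3^2+y3^2 = r"
    and T12: "(x1 * x1+y1 * y1) * ((x2-x1) * (x2-x1)+(y2-y1) * (y2-y1)) - (x1 * (x2-x1)+y1 * (y2-y1))^2 = a * a * ((x2-x1) * (x2-x1)+(y2-y1) * (y2-y1)) - ((x2-x1) * p+(y2-y1) * q)^2"
    and T23: "(x2 * x2+y2 * y2) * ((x3-x2) * (x3-x2)+(y3-y2) * (y3-y2)) - (x2 * (x3-x2)+y2 * (y3-y2))^2 = a * a * ((x3-x2) * (x3-x2)+(y3-y2) * (y3-y2)) - ((x3-x2) * p+(y3-y2) * q)^2"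
    and T31: "(x3 * x3+y3 * y3) * ((x1-x3) * (x1-x3)+(y1-y3) * (y1-y3)) - (x3 * (x1-x3)+y3 * (y1-y3))^2 = a * a * ((x1-x3) * (x1-x3)+(y1-y3) * (y1-y3)) - ((x1-x3) * p+(y1-y3) * q)^2"
    and cr: "(x2-x1) * (y3-y1)-(y2-y1) * (x3-x1) \<noteq> 0"
    and rpos: "r > 0"
  shows "(p * p+q * q)^2 = r * ((x1+x2+x3)^2+(y1+y2+y3)^2)"
proof -
  have h1: "x1^2+y1^2-r = 0" using c1 by simp
  have h2: "x2^2+y2^2-r = 0" using c2 by simp
  have h3: "x3^2+y3^2-r = 0" using c3 by simp
  have ne12: "(x1,y1) \<noteq> (x2,y2)" using cr by auto
  have ne23: "(x2,y2) \<noteq> (x3,y3)" using cr by auto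
  have ne31: "(x3,y3) \<noteq> (x1,y1)" using cr by auto
  have e12: "r * (x1 * x2+y1 * y2)-((p * p-q * q) * (x1 * x2-y1 * y2)+2 * p * q * (x1 * y2+y1 * x2))-r * (2 * a * a-(p * p+q * q)-r) = 0" by (rule E_of_T[OF c1 c2 T12 ne12])
  have e23: "r * (x2 * x3+y2 * y3)-((p * p-q * q) * (x2 * x3-y2 * y3)+2 * p * q * (x2 * y3+y2 * x3))-r * (2 * a * a-(p * p+q * q)-r) = 0" by (rule E_of_T[OF c2 c3 T23 ne23])
  have e31: "r * (x3 * x1+y3 * y1)-((p * p-q * q) * (x3 * x1-y3 * y1)+2 * p * q * (x3 * y1+y3 * x1))-r * (2 * a * a-(p * p+q * q)-r) = 0" by (rule E_of_T[OF c3 c1 T31 ne31])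
  define s where "s = p * p-q * q"
  define t where "t = 2 * p * q"
  define s0 where "s0 = -((x1 * x2-y1 * y2)+(x2 * x3-y2 * y3)+(x3 * x1-y3 * y1))"
  define t0 where "t0 = -((x1 * y2+y1 * x2)+(x2 * y3+y2 * x3)+(x3 * y1+y3 * x1))"
  have g1: "r * (x1 * (x2-x3)+y1 * (y2-y3)) - (s * (x1 * (x2-x3)-y1 * (y2-y3)) + t * (x1 * (y2-y3)+y1 * (x2-x3))) = (r * (x1 * x2+y1 * y2)-((p * p-q * q) * (x1 * x2-y1 * y2)+2 * p * q * (x1 * y2+y1 * x2))-r * (2 * a * a-(p * p+q * q)-r)) - (r * (x3 * x1+y3 * y1)-((p * p-q * q) * (x3 * x1-y3 * y1)+2 * p * q * (x3 * y1+y3 * x1))-r * (2 * a * a-(p * p+q * q)-r))"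
    unfolding s_def t_def by (simp add: algebra_simps)
  have g2: "r * (x2 * (x1-x3)+y2 * (y1-y3)) - (s * (x2 * (x1-x3)-y2 * (y1-y3)) + t * (x2 * (y1-y3)+y2 * (x1-x3))) = (r * (x1 * x2+y1 * y2)-((p * p-q * q) * (x1 * x2-y1 * y2)+2 * p * q * (x1 * y2+y1 * x2))-r * (2 * a * a-(p * p+q * q)-r)) - (r * (x2 * x3+y2 * y3)-((p * p-q * q) * (x2 * x3-y2 * y3)+2 * p * q * (x2 * y3+y2 * x3))-r * (2 * a * a-(p * p+q * q)-r))"
    unfolding s_def t_def by (simp add: algebra_simps)
  have k1: "r * (x1 * (x2-x3)+y1 * (y2-y3)) - (s0 * (x1 * (x2-x3)-y1 * (y2-y3)) + t0 * (x1 * (y2-y3)+y1 * (x2-x3))) = (0 - y3^2 - x3^2 + y2^2 + x2^2) * (x1^2+y1^2-r) + (r + y1 * y3 + x1 * x3) * (x2^2+y2^2-r) + (0 - r - y1 * y2 - x1 * x2) * (x3^2+y3^2-r)"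
    unfolding s0_def t0_def by (simp add: algebra_simps power2_eq_square)
  have k2: "r * (x2 * (x1-x3)+y2 * (y1-y3)) - (s0 * (x2 * (x1-x3)-y2 * (y1-y3)) + t0 * (x2 * (y1-y3)+y2 * (x1-x3))) = (y2 * y3 + y2^2 + x2 * x3 + x2^2) * (x1^2+y1^2-r) + (r - y3^2 - x3^2) * (x2^2+y2^2-r) + (0 - r - y1 * y2 - x1 * x2) * (x3^2+y3^2-r)"
    unfolding s0_def t0_def by (simp add: algebra_simps power2_eq_square)
  have dt: "(x1 * (x2-x3)-y1 * (y2-y3)) * (x2 * (y1-y3)+y2 * (x1-x3)) - (x1 * (y2-y3)+y1 * (x2-x3)) * (x2 * (x1-x3)-y2 * (y1-y3)) - r * ((x2-x1) * (y3-y1)-(y2-y1) * (x3-x1)) = (0 - y2 * x3 + x2 * y3) * (x1^2+y1^2-r) + (y1 * x3 - x1 * y3) * (x2^2+y2^2-r) + (0 - y1 * x2 + x1 * y2) * (x3^2+y3^2-r)"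
    by (simp add: algebra_simps power2_eq_square)
  have fn: "s0^2+t0^2 - r * ((x1+x2+x3)^2+(y1+y2+y3)^2) = (0 - r + y3^2 + x3^2 + 2 * y2 * y3 + y2^2 + 2 * x2 * x3 + x2^2) * (x1^2+y1^2-r) + (y3^2 + x3^2 + 2 * y1 * y3 + 2 * x1 * x3) * (x2^2+y2^2-r) + (r + 2 * y1 * y2 + 2 * x1 * x2) * (x3^2+y3^2-r)"
    unfolding s0_def t0_def by (simp add: algebra_simps power2_eq_square)
  have g1': "r * (x1 * (x2-x3)+y1 * (y2-y3)) - (s * (x1 * (x2-x3)-y1 * (y2-y3)) + t * (x1 * (y2-y3)+y1 * (x2-x3))) = 0" using g1 e12 e31 by simp
  have g2': "r * (x2 * (x1-x3)+y2 * (y1-y3)) - (s * (x2 * (x1-x3)-y2 * (y1-y3)) + t * (x2 * (y1-y3)+y2 * (x1-x3))) = 0" using g2 e12 e23 by simp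
  have k1': "r * (x1 * (x2-x3)+y1 * (y2-y3)) - (s0 * (x1 * (x2-x3)-y1 * (y2-y3)) + t0 * (x1 * (y2-y3)+y1 * (x2-x3))) = 0" using k1 h1 h2 h3 by simp
  have k2': "r * (x2 * (x1-x3)+y2 * (y1-y3)) - (s0 * (x2 * (x1-x3)-y2 * (y1-y3)) + t0 * (x2 * (y1-y3)+y2 * (x1-x3))) = 0" using k2 h1 h2 h3 by simp
  have dt': "(x1 * (x2-x3)-y1 * (y2-y3)) * (x2 * (y1-y3)+y2 * (x1-x3)) - (x1 * (y2-y3)+y1 * (x2-x3)) * (x2 * (x1-x3)-y2 * (y1-y3)) = r * ((x2-x1) * (y3-y1)-(y2-y1) * (x3-x1))" using dt h1 h2 h3 by simp
  have fn': "s0^2+t0^2 = r * ((x1+x2+x3)^2+(y1+y2+y3)^2)" using fn h1 h2 h3 by simp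
  have l1: "(s-s0) * (x1 * (x2-x3)-y1 * (y2-y3)) + (t-t0) * (x1 * (y2-y3)+y1 * (x2-x3)) = 0"
  proof -
    have "(s-s0) * (x1 * (x2-x3)-y1 * (y2-y3)) + (t-t0) * (x1 * (y2-y3)+y1 * (x2-x3)) = (r * (x1 * (x2-x3)+y1 * (y2-y3)) - (s0 * (x1 * (x2-x3)-y1 * (y2-y3)) + t0 * (x1 * (y2-y3)+y1 * (x2-x3)))) - (r * (x1 * (x2-x3)+y1 * (y2-y3)) - (s * (x1 * (x2-x3)-y1 * (y2-y3)) + t * (x1 * (y2-y3)+y1 * (x2-x3))))"
      by (simp add: algebra_simps)
    then show ?thesis using g1' k1' by simp
  qed
  have l2: "(s-s0) * (x2 * (x1-x3)-y2 * (y1-y3)) + (t-t0) * (x2 * (y1-y3)+y2 * (x1-x3)) = 0"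
  proof -
    have "(s-s0) * (x2 * (x1-x3)-y2 * (y1-y3)) + (t-t0) * (x2 * (y1-y3)+y2 * (x1-x3)) = (r * (x2 * (x1-x3)+y2 * (y1-y3)) - (s0 * (x2 * (x1-x3)-y2 * (y1-y3)) + t0 * (x2 * (y1-y3)+y2 * (x1-x3)))) - (r * (x2 * (x1-x3)+y2 * (y1-y3)) - (s * (x2 * (x1-x3)-y2 * (y1-y3)) + t * (x2 * (y1-y3)+y2 * (x1-x3))))"
      by (simp add: algebra_simps)
    then show ?thesis using g2' k2' by simp
  qed
  have dnz: "(x1 * (x2-x3)-y1 * (y2-y3)) * (x2 * (y1-y3)+y2 * (x1-x3)) - (x1 * (y2-y3)+y1 * (x2-x3)) * (x2 * (x1-x3)-y2 * (y1-y3)) \<noteq> 0" using dt' rpos cr by simp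
  have "(s-s0) * ((x1 * (x2-x3)-y1 * (y2-y3)) * (x2 * (y1-y3)+y2 * (x1-x3)) - (x1 * (y2-y3)+y1 * (x2-x3)) * (x2 * (x1-x3)-y2 * (y1-y3))) = ((s-s0) * (x1 * (x2-x3)-y1 * (y2-y3)) + (t-t0) * (x1 * (y2-y3)+y1 * (x2-x3))) * (x2 * (y1-y3)+y2 * (x1-x3)) - ((s-s0) * (x2 * (x1-x3)-y2 * (y1-y3)) + (t-t0) * (x2 * (y1-y3)+y2 * (x1-x3))) * (x1 * (y2-y3)+y1 * (x2-x3))"
    by (simp add: algebra_simps)
  then have "(s-s0) * ((x1 * (x2-x3)-y1 * (y2-y3)) * (x2 * (y1-y3)+y2 * (x1-x3)) - (x1 * (y2-y3)+y1 * (x2-x3)) * (x2 * (x1-x3)-y2 * (y1-y3))) = 0" using l1 l2 by simp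
  then have ss: "s = s0" using dnz by simp
  have "(t-t0) * ((x1 * (x2-x3)-y1 * (y2-y3)) * (x2 * (y1-y3)+y2 * (x1-x3)) - (x1 * (y2-y3)+y1 * (x2-x3)) * (x2 * (x1-x3)-y2 * (y1-y3))) = ((s-s0) * (x2 * (x1-x3)-y2 * (y1-y3)) + (t-t0) * (x2 * (y1-y3)+y2 * (x1-x3))) * (x1 * (x2-x3)-y1 * (y2-y3)) - ((s-s0) * (x1 * (x2-x3)-y1 * (y2-y3)) + (t-t0) * (x1 * (y2-y3)+y1 * (x2-x3))) * (x2 * (x1-x3)-y2 * (y1-y3))"
    by (simp add: algebra_simps)
  then have "(t-t0) * ((x1 * (x2-x3)-y1 * (y2-y3)) * (x2 * (y1-y3)+y2 * (x1-x3)) - (x1 * (y2-y3)+y1 * (x2-x3)) * (x2 * (x1-x3)-y2 * (y1-y3))) = 0" using l1 l2 by simp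
  then have tt: "t = t0" using dnz by simp
  have "(p * p+q * q)^2 = s^2+t^2" unfolding s_def t_def by (simp add: algebra_simps power2_eq_square)
  then show ?thesis using ss tt fn' by simp
qed



lemma gram2:
  fixes a1 a2 b1 b2 c1 c2 :: real
  shows "(a1 * a1+a2 * a2) * (b1 * b1+b2 * b2) * (c1 * c1+c2 * c2) + 2 * (a1 * b1+a2 * b2) * (b1 * c1+b2 * c2) * (c1 * a1+c2 * a2)
    - (a1 * a1+a2 * a2) * (b1 * c1+b2 * c2)^2 - (b1 * b1+b2 * b2) * (c1 * a1+c2 * a2)^2 - (c1 * c1+c2 * c2) * (a1 * b1+a2 * b2)^2 = 0"
  by (simp add: algebra_simps power2_eq_square)

lemma sgn_id:
  fixes x1 y1 x2 y2 x3 y3 r :: real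
  assumes c1: "x1^2+y1^2 = r" and c2: "x2^2+y2^2 = r" and c3: "x3^2+y3^2 = r"
  shows "(r - ((x1+x2+x3)^2+(y1+y2+y3)^2)) * (((x2-x1)^2+(y2-y1)^2) * ((x3-x2)^2+(y3-y2)^2) * ((x1-x3)^2+(y1-y3)^2))
     = 8 * r * (((x2-x1) * (x3-x1)+(y2-y1) * (y3-y1)) * ((x1-x2) * (x3-x2)+(y1-y2) * (y3-y2)) * ((x1-x3) * (x2-x3)+(y1-y3) * (y2-y3)))"
proof -
  define u where "u = x1 * x2+y1 * y2"
  define v where "v = x2 * x3+y2 * y3"
  define w where "w = x3 * x1+y3 * y1"
  have n1: "x1 * x1+y1 * y1 = r" using c1 by (simp add: power2_eq_square)
  have n2: "x2 * x2+y2 * y2 = r" using c2 by (simp add: power2_eq_square)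
  have n3: "x3 * x3+y3 * y3 = r" using c3 by (simp add: power2_eq_square)
  have g: "r * r * r + 2 * u * v * w - r * v^2 - r * w^2 - r * u^2 = 0"
    using gram2[of x1 y1 x2 y2 x3 y3] unfolding u_def v_def w_def n1 n2 n3 .
  have ab: "(x2-x1)^2+(y2-y1)^2 = (x1 * x1+y1 * y1) + (x2 * x2+y2 * y2) - 2 * u"
    unfolding u_def by (simp add: algebra_simps power2_eq_square)
  have bc: "(x3-x2)^2+(y3-y2)^2 = (x2 * x2+y2 * y2) + (x3 * x3+y3 * y3) - 2 * v"
    unfolding v_def by (simp add: algebra_simps power2_eq_square)
  have ca: "(x1-x3)^2+(y1-y3)^2 = (x3 * x3+y3 * y3) + (x1 * x1+y1 * y1) - 2 * w"
    unfolding w_def by (simp add: algebra_simps power2_eq_square)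
  have da: "(x2-x1) * (x3-x1)+(y2-y1) * (y3-y1) = (x1 * x1+y1 * y1) - u - w + v"
    unfolding u_def v_def w_def by (simp add: algebra_simps)
  have db: "(x1-x2) * (x3-x2)+(y1-y2) * (y3-y2) = (x2 * x2+y2 * y2) - u - v + w"
    unfolding u_def v_def w_def by (simp add: algebra_simps)
  have dc: "(x1-x3) * (x2-x3)+(y1-y3) * (y2-y3) = (x3 * x3+y3 * y3) - v - w + u"
    unfolding u_def v_def w_def by (simp add: algebra_simps)
  have hh: "(x1+x2+x3)^2+(y1+y2+y3)^2 = (x1 * x1+y1 * y1)+(x2 * x2+y2 * y2)+(x3 * x3+y3 * y3) + 2 * (u+v+w)"
    unfolding u_def v_def w_def by (simp add: algebra_simps power2_eq_square)
  have key: "(r - (3 * r + 2 * (u+v+w))) * ((2 * r-2 * u) * (2 * r-2 * v) * (2 * r-2 * w)) - 8 * r * ((r-u-w+v) * (r-u-v+w) * (r-v-w+u))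
     = (8 * (u+v+w) - 24 * r) * (r * r * r + 2 * u * v * w - r * v^2 - r * w^2 - r * u^2)"
    by (simp add: algebra_simps power2_eq_square)
  show ?thesis unfolding ab bc ca da db dc hh n1 n2 n3 using key g by simp
qed



lemma inner2: "(x::real^2) \<bullet> y = x$1 * y$1 + x$2 * y$2"
  by (simp add: inner_vec_def sum_2)

lemma S1:
  fixes r1 r2 n u \<phi> a :: real
  assumes "r1^2 = n - 2 * u + \<phi>" "r2^2 = n + 2 * u + \<phi>" "r1 + r2 = 2 * a" "a > 0"
  shows "a^2 * n - u^2 = a^2 * (a^2 - \<phi>)"
proof -
  have r2: "r2 = 2 * a - r1" using assms(3) by simp
  have "(2 * a - r1)^2 = 4 * a^2 - 4 * (a * r1) + r1^2" by (simp add: algebra_simps power2_eq_square)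
  then have "4 * (a * r1) = 4 * a^2 - 4 * u" using assms(1,2) r2 by simp
  then have ar: "a * r1 = a^2 - u" by simp
  have "(a * r1)^2 = a^2 * r1^2" by (simp add: power_mult_distrib)
  then have "(a^2-u)^2 = a^2 * (n - 2 * u + \<phi>)" using ar assms(1) by simp
  then show ?thesis by (simp add: algebra_simps power2_eq_square)
qed

lemma S2:
  fixes n u \<phi> a :: real
  assumes a: "a > 0" and ph: "\<phi> < a^2" "0 \<le> \<phi>" and nn: "0 \<le> n" and cs: "u^2 \<le> n * \<phi>"
    and eq: "a^2 * n - u^2 = a^2 * (a^2 - \<phi>)"
  shows "sqrt (n - 2 * u + \<phi>) + sqrt (n + 2 * u + \<phi>) = 2 * a"
proof -
  have "a^2 * n \<le> n * \<phi> + a^2 * (a^2-\<phi>)" using eq cs by linarith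
  then have "(a^2-\<phi>) * n \<le> (a^2-\<phi>) * a^2" by (simp add: algebra_simps)
  then have na: "n \<le> a^2" using ph by (simp add: mult_le_cancel_left_pos)
  have "n * \<phi> \<le> a^2 * \<phi>" using na ph(2) by (simp add: mult_right_mono)
  also have "a^2 * \<phi> \<le> a^2 * a^2" using mult_left_mono[OF less_imp_le[OF ph(1)], of "a^2"] by simp
  finally have "u^2 \<le> (a^2)^2" using cs by (simp add: power2_eq_square)
  then have ua: "\<bar>u\<bar> \<le> a^2" using abs_le_square_iff[of u "a^2"] by simp
  have a2: "a^2 > 0" using a by simp
  have uu: "u^2/a^2 = n - a^2 + \<phi>" using eq a2 by (simp add: field_simps)
  have e1: "n - 2 * u + \<phi> = (a - u/a)^2"
  proof -
    have "(a - u/a)^2 = a^2 - 2 * u + u^2/a^2" using a by (simp add: power2_eq_square field_simps)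
    then show ?thesis using uu by simp
  qed
  have e2: "n + 2 * u + \<phi> = (a + u/a)^2"
  proof -
    have "(a + u/a)^2 = a^2 + 2 * u + u^2/a^2" using a by (simp add: power2_eq_square field_simps)
    then show ?thesis using uu by simp
  qed
  have "u/a \<le> a" using ua a by (simp add: divide_le_eq power2_eq_square)
  moreover have "-a \<le> u/a" using ua a by (simp add: le_divide_eq power2_eq_square)
  ultimately show ?thesis unfolding e1 e2 by simp
qed

lemma ellipse_iff:
  fixes X f :: "'a::real_inner" and a :: real
  assumes af: "norm f < a"
  shows "norm (X - f) + norm (X + f) = 2 * a \<longleftrightarrow> a^2 * (X\<bullet>X) - (X\<bullet>f)^2 = a^2 * (a^2 - f\<bullet>f)"
proof -
  have a: "a > 0" using af norm_ge_zero[of f] by linarith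
  have m: "(norm (X - f))^2 = X\<bullet>X - 2 * (X\<bullet>f) + f\<bullet>f"
    by (simp add: power2_norm_eq_inner inner_diff inner_commute)
  have p: "(norm (X + f))^2 = X\<bullet>X + 2 * (X\<bullet>f) + f\<bullet>f"
    by (simp add: power2_norm_eq_inner inner_add inner_commute)
  show ?thesis
  proof
    assume "norm (X - f) + norm (X + f) = 2 * a"
    then show "a^2 * (X\<bullet>X) - (X\<bullet>f)^2 = a^2 * (a^2 - f\<bullet>f)" using S1[OF m p _ a] by simp
  next
    assume eq: "a^2 * (X\<bullet>X) - (X\<bullet>f)^2 = a^2 * (a^2 - f\<bullet>f)"
    have ph: "f\<bullet>f < a^2" using af by (metis norm_ge_zero power2_norm_eq_inner power_strict_mono zero_less_numeral)
    have S: "sqrt (X\<bullet>X - 2 * (X\<bullet>f) + f\<bullet>f) + sqrt (X\<bullet>X + 2 * (X\<bullet>f) + f\<bullet>f) = 2 * a"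
      by (rule S2[OF a ph inner_ge_zero inner_ge_zero Cauchy_Schwarz_ineq eq])
    have "norm (X - f) = sqrt (X\<bullet>X - 2 * (X\<bullet>f) + f\<bullet>f)" using m by (metis norm_ge_zero real_sqrt_unique)
    moreover have "norm (X + f) = sqrt (X\<bullet>X + 2 * (X\<bullet>f) + f\<bullet>f)" using p by (metis norm_ge_zero real_sqrt_unique)
    ultimately show "norm (X - f) + norm (X + f) = 2 * a" using S by simp
  qed
qed



lemma gram_vec:
  fixes x y z :: "real^2"
  shows "(y\<bullet>y) * (x\<bullet>z)^2 - 2 * (x\<bullet>y) * (x\<bullet>z) * (y\<bullet>z) + (x\<bullet>x) * (y\<bullet>z)^2 = (z\<bullet>z) * ((x\<bullet>x) * (y\<bullet>y) - (x\<bullet>y)^2)"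
  by (simp add: inner2 algebra_simps power2_eq_square)

lemma tangent_T:
  fixes X Y Oc f :: point and a :: real
  assumes af: "norm f < a" and XY: "X \<noteq> Y"
    and tg: "tangent_line (line_through X Y) (ellipse (Oc+f) (Oc-f) a)"
  shows "((X-Oc)\<bullet>(X-Oc)) * (((Y-Oc)-(X-Oc))\<bullet>((Y-Oc)-(X-Oc))) - ((X-Oc)\<bullet>((Y-Oc)-(X-Oc)))^2
       = a * a * (((Y-Oc)-(X-Oc))\<bullet>((Y-Oc)-(X-Oc))) - (((Y-Oc)-(X-Oc))\<bullet>f)^2"
proof -
  define Z where "Z = X - Oc"
  define V where "V = Y - X"
  have VZ: "(Y-Oc)-(X-Oc) = V" unfolding V_def by simp
  have V0: "V \<noteq> 0" using XY unfolding V_def by simp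
  define zz where "zz = Z\<bullet>Z"
  define zv where "zv = Z\<bullet>V"
  define vv where "vv = V\<bullet>V"
  define zf where "zf = Z\<bullet>f"
  define vf where "vf = V\<bullet>f"
  define ff where "ff = f\<bullet>f"
  define Q where "Q t = a^2 * (zz + 2 * t * zv + t^2 * vv) - (zf + t * vf)^2 - a^2 * (a^2-ff)" for t
  have a: "a > 0" using af norm_ge_zero[of f] by linarith
  have mem: "X + t *\<^sub>R (Y-X) \<in> ellipse (Oc+f) (Oc-f) a \<longleftrightarrow> Q t = 0" for t
  proof -
    have d1: "dist (X + t *\<^sub>R (Y-X)) (Oc+f) = norm ((Z + t *\<^sub>R V) - f)"
      unfolding dist_norm Z_def V_def by (simp add: algebra_simps)
    have d2: "dist (X + t *\<^sub>R (Y-X)) (Oc-f) = norm ((Z + t *\<^sub>R V) + f)"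
      unfolding dist_norm Z_def V_def by (simp add: algebra_simps)
    have i1: "(Z + t *\<^sub>R V)\<bullet>(Z + t *\<^sub>R V) = zz + 2 * t * zv + t^2 * vv"
      unfolding zz_def zv_def vv_def by (simp add: inner_add inner_commute power2_eq_square algebra_simps)
    have i2: "(Z + t *\<^sub>R V)\<bullet>f = zf + t * vf"
      unfolding zf_def vf_def by (simp add: inner_add)
    show ?thesis
      unfolding ellipse_def mem_Collect_eq d1 d2 ellipse_iff[OF af] i1 i2 Q_def ff_def
      by linarith
  qed
  from tg obtain P0 where P0: "P0 \<in> line_through X Y" "P0 \<in> ellipse (Oc+f) (Oc-f) a"
    and uq: "\<And>P. P \<in> line_through X Y \<and> P \<in> ellipse (Oc+f) (Oc-f) a \<Longrightarrow> P = P0"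
    unfolding tangent_line_def by blast
  from P0(1) obtain t0 where t0: "P0 = X + t0 *\<^sub>R (Y - X)" unfolding line_through_def by blast
  have Qt0: "Q t0 = 0" using P0(2) mem t0 by simp
  have uniq: "t = t0" if "Q t = 0" for t
  proof -
    have "X + t *\<^sub>R (Y-X) \<in> line_through X Y" unfolding line_through_def by blast
    moreover have "X + t *\<^sub>R (Y-X) \<in> ellipse (Oc+f) (Oc-f) a" using mem that by simp
    ultimately have "X + t *\<^sub>R (Y-X) = X + t0 *\<^sub>R (Y - X)" using uq t0 by blast
    then have "t *\<^sub>R V = t0 *\<^sub>R V" unfolding V_def by simp
    then show ?thesis using V0 by simp
  qed
  define \<alpha> where "\<alpha> = a^2 * vv - vf^2"
  define \<beta> where "\<beta> = 2 * (a^2 * zv - zf * vf)"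
  define \<gamma> where "\<gamma> = a^2 * zz - zf^2 - a^2 * (a^2-ff)"
  have Qe: "Q t = \<alpha> * t^2 + \<beta> * t + \<gamma>" for t
    unfolding Q_def \<alpha>_def \<beta>_def \<gamma>_def by (simp add: algebra_simps power2_eq_square)
  have vvp: "vv > 0" unfolding vv_def using V0 by simp
  have ffa: "ff < a^2" unfolding ff_def using af
    by (metis norm_ge_zero power2_norm_eq_inner power_strict_mono zero_less_numeral)
  have cs: "vf^2 \<le> vv * ff" unfolding vf_def vv_def ff_def by (rule Cauchy_Schwarz_ineq)
  have "vv * ff < vv * a^2" using vvp ffa by simp
  then have alp: "\<alpha> > 0" unfolding \<alpha>_def using cs by (simp add: algebra_simps)
  define t1 where "t1 = -\<beta>/\<alpha> - t0"
  have "Q t1 = Q t0"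
  proof -
    have "\<alpha> * t1 = -\<beta> - \<alpha> * t0" unfolding t1_def using alp by (simp add: field_simps)
    then have h1: "\<alpha> * t1 + \<beta> = -(\<alpha> * t0)" and h2: "\<alpha> * t0 + \<beta> = -(\<alpha> * t1)" by simp_all
    have "\<alpha> * t1^2 + \<beta> * t1 = t1 * (\<alpha> * t1 + \<beta>)" by (simp add: algebra_simps power2_eq_square)
    also have "\<dots> = -(\<alpha> * t0 * t1)" unfolding h1 by simp
    also have "\<dots> = t0 * (\<alpha> * t0 + \<beta>)" unfolding h2 by simp
    also have "\<dots> = \<alpha> * t0^2 + \<beta> * t0" by (simp add: algebra_simps power2_eq_square)
    finally have "\<alpha> * t1^2 + \<beta> * t1 = \<alpha> * t0^2 + \<beta> * t0" .
    then show ?thesis unfolding Qe by simp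
  qed
  then have "Q t1 = 0" using Qt0 by simp
  then have "t1 = t0" by (rule uniq)
  then have tb: "2 * \<alpha> * t0 = -\<beta>" unfolding t1_def using alp by (simp add: field_simps)
  have "4 * \<alpha> * Q t0 = (2 * \<alpha> * t0)^2 + 2 * \<beta> * (2 * \<alpha> * t0) + 4 * \<alpha> * \<gamma>"
    unfolding Qe by (simp add: algebra_simps power2_eq_square)
  then have "0 = \<beta>^2 - 2 * \<beta>^2 + 4 * \<alpha> * \<gamma>" using Qt0 tb by (simp add: power2_eq_square)
  then have disc: "\<beta>^2 = 4 * \<alpha> * \<gamma>" by simp
  have gr: "vv * zf^2 - 2 * zv * zf * vf + zz * vf^2 = ff * (zz * vv - zv^2)"
    unfolding vv_def zf_def zv_def vf_def zz_def ff_def by (rule gram_vec)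
  have "\<beta>^2 - 4 * (\<alpha> * \<gamma>) = 4 * a^2 * (a^2 * (zv^2 - vv * zz) + (vv * zf^2 - 2 * zv * zf * vf + zz * vf^2) + (a^2-ff) * \<alpha>)"
    unfolding \<alpha>_def \<beta>_def \<gamma>_def by (simp add: algebra_simps power2_eq_square)
  also have "\<dots> = 4 * a^2 * (a^2-ff) * (\<alpha> - (zz * vv - zv^2))" unfolding gr by (simp add: algebra_simps)
  finally have "4 * a^2 * (a^2-ff) * (\<alpha> - (zz * vv - zv^2)) = 0" using disc by simp
  moreover have "4 * a^2 * (a^2-ff) \<noteq> 0" using a ffa by simp
  ultimately have "zz * vv - zv^2 = \<alpha>" by simp
  then show ?thesis unfolding VZ unfolding Z_def[symmetric] unfolding zz_def[symmetric] zv_def[symmetric] vv_def[symmetric] vf_def[symmetric]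
    unfolding \<alpha>_def by (simp add: power2_eq_square)
qed



lemma ang_iff:
  fixes u v :: point
  assumes "u \<noteq> 0" "v \<noteq> 0"
  shows "arccos ((u\<bullet>v)/(norm u * norm v)) < pi/2 \<longleftrightarrow> u\<bullet>v > 0"
    and "arccos ((u\<bullet>v)/(norm u * norm v)) > pi/2 \<longleftrightarrow> u\<bullet>v < 0"
proof -
  define d where "d = norm u * norm v"
  define x where "x = (u\<bullet>v)/d"
  have dp: "d > 0" unfolding d_def using assms by simp
  have cs: "\<bar>u\<bullet>v\<bar> \<le> d" unfolding d_def by (rule Cauchy_Schwarz_ineq2)
  have x1: "x \<le> 1" unfolding x_def using cs dp by (simp add: divide_le_eq abs_le_iff)
  have x2: "-1 \<le> x" unfolding x_def using cs dp by (simp add: le_divide_eq abs_le_iff)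
  have sp: "x > 0 \<longleftrightarrow> u\<bullet>v > 0" unfolding x_def using dp by (simp add: zero_less_divide_iff)
  have sn: "x < 0 \<longleftrightarrow> u\<bullet>v < 0" unfolding x_def using dp by (simp add: divide_less_0_iff)
  have "arccos x < pi/2 \<longleftrightarrow> x > 0"
  proof
    assume h: "arccos x < pi/2"
    show "x > 0"
    proof (rule ccontr)
      assume "\<not> x > 0"
      then have "arccos 0 \<le> arccos x" using arccos_le_arccos[of x 0] x2 by simp
      then show False using h by simp
    qed
  next
    assume "x > 0"
    then show "arccos x < pi/2" using arccos_less_arccos[of 0 x] x1 by simp
  qed
  then show "arccos ((u\<bullet>v)/(norm u * norm v)) < pi/2 \<longleftrightarrow> u\<bullet>v > 0"
    using sp unfolding x_def d_def by simp
  have "arccos x > pi/2 \<longleftrightarrow> x < 0"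
  proof
    assume h: "arccos x > pi/2"
    show "x < 0"
    proof (rule ccontr)
      assume "\<not> x < 0"
      then have "arccos x \<le> arccos 0" using arccos_le_arccos[of 0 x] x1 by simp
      then show False using h by simp
    qed
  next
    assume "x < 0"
    then show "arccos x > pi/2" using arccos_less_arccos[of x 0] x2 by simp
  qed
  then show "arccos ((u\<bullet>v)/(norm u * norm v)) > pi/2 \<longleftrightarrow> u\<bullet>v < 0"
    using sn unfolding x_def d_def by simp
qed

lemma cross_ne:
  fixes A B C :: point
  assumes nc: "\<not> collinear {A,B,C}"
  shows "(B$1-A$1) * (C$2-A$2) - (B$2-A$2) * (C$1-A$1) \<noteq> 0"
proof
  assume c0: "(B$1-A$1) * (C$2-A$2) - (B$2-A$2) * (C$1-A$1) = 0"
  have "(B$1 - C$1) * (A$2 - C$2) - (B$2 - C$2) * (A$1 - C$1) = -((B$1-A$1) * (C$2-A$2) - (B$2-A$2) * (C$1-A$1))"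
    by (simp add: algebra_simps)
  then have c1: "(B$1 - C$1) * (A$2 - C$2) = (B$2 - C$2) * (A$1 - C$1)" using c0 by simp
  have "collinear {A,B,C}"
  proof (cases "A = C")
    case True
    then show ?thesis by (simp add: collinear_3_expand)
  next
    case False
    then have "A$1 \<noteq> C$1 \<or> A$2 \<noteq> C$2" by (simp add: vec_eq_iff forall_2)
    then show ?thesis
    proof
      assume h: "A$1 \<noteq> C$1"
      define u where "u = (B$1 - C$1)/(A$1 - C$1)"
      have "B = u *\<^sub>R A + (1 - u) *\<^sub>R C"
      proof -
        have k: "u * (A$1 - C$1) = B$1 - C$1" unfolding u_def using h by simp
        have "u * A$1 + (1-u) * C$1 = u * (A$1 - C$1) + C$1" by (simp add: algebra_simps)
        then have e1: "B$1 = u * A$1 + (1-u) * C$1" using k by simp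
        have "u * (A$2 - C$2) = ((B$1-C$1) * (A$2-C$2))/(A$1-C$1)" unfolding u_def by simp
        also have "\<dots> = ((B$2-C$2) * (A$1-C$1))/(A$1-C$1)" using c1 by simp
        also have "\<dots> = B$2-C$2" using h by simp
        finally have k2: "u * (A$2 - C$2) = B$2 - C$2" .
        have "u * A$2 + (1-u) * C$2 = u * (A$2 - C$2) + C$2" by (simp add: algebra_simps)
        then have e2: "B$2 = u * A$2 + (1-u) * C$2" using k2 by simp
        show ?thesis using e1 e2 by (simp add: vec_eq_iff forall_2)
      qed
      then show ?thesis by (auto simp: collinear_3_expand)
    next
      assume h: "A$2 \<noteq> C$2"
      define u where "u = (B$2 - C$2)/(A$2 - C$2)"
      have "B = u *\<^sub>R A + (1 - u) *\<^sub>R C"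
      proof -
        have k: "u * (A$2 - C$2) = B$2 - C$2" unfolding u_def using h by simp
        have "u * A$2 + (1-u) * C$2 = u * (A$2 - C$2) + C$2" by (simp add: algebra_simps)
        then have e2: "B$2 = u * A$2 + (1-u) * C$2" using k by simp
        have "u * (A$1 - C$1) = ((B$2-C$2) * (A$1-C$1))/(A$2-C$2)" unfolding u_def by simp
        also have "\<dots> = ((B$1-C$1) * (A$2-C$2))/(A$2-C$2)" using c1 by simp
        also have "\<dots> = B$1-C$1" using h by simp
        finally have k2: "u * (A$1 - C$1) = B$1 - C$1" .
        have "u * A$1 + (1-u) * C$1 = u * (A$1 - C$1) + C$1" by (simp add: algebra_simps)
        then have e1: "B$1 = u * A$1 + (1-u) * C$1" using k2 by simp
        show ?thesis using e1 e2 by (simp add: vec_eq_iff forall_2)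
      qed
      then show ?thesis by (auto simp: collinear_3_expand)
    qed
  qed
  with nc show False by simp
qed

lemma final_scalar:
  fixes R c H2 dA dB dC P :: real
  assumes R: "R > 0" and c: "c \<ge> 0" and cc: "(c^2)^2 = R^2 * H2"
    and P: "P > 0" and id: "(R^2 - H2) * P = 8 * R^2 * (dA * dB * dC)"
    and s1: "dA + dB > 0" and s2: "dB + dC > 0" and s3: "dA + dC > 0"
  shows "((dA > 0 \<and> dB > 0 \<and> dC > 0) \<longleftrightarrow> R > c) \<and> ((dA < 0 \<or> dB < 0 \<or> dC < 0) \<longleftrightarrow> R < c)"
proof -
  have R2: "R^2 > 0" using R by simp
  have c4: "c^4 = R^2 * H2" using cc by (simp add: power_mult[symmetric])
  have gt: "c < R \<longleftrightarrow> c^4 < R^4"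
    using power_strict_mono[of c R 4] power_less_imp_less_base[of c 4 R] R c by auto
  have lt: "R < c \<longleftrightarrow> R^4 < c^4"
    using power_strict_mono[of R c 4] power_less_imp_less_base[of R 4 c] R c by auto
  have R4: "R^4 = R^2 * R^2" by (simp add: power_mult[symmetric])
  have g1: "c^4 < R^4 \<longleftrightarrow> H2 < R^2"
  proof -
    have "c^4 < R^4 \<longleftrightarrow> R^2 * H2 < R^2 * R^2" by (simp only: c4 R4)
    also have "\<dots> \<longleftrightarrow> H2 < R^2" by (rule mult_less_cancel_left_pos[OF R2])
    finally show ?thesis .
  qed
  have g2: "R^4 < c^4 \<longleftrightarrow> R^2 < H2"
  proof -
    have "R^4 < c^4 \<longleftrightarrow> R^2 * R^2 < R^2 * H2" by (simp only: c4 R4)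
    also have "\<dots> \<longleftrightarrow> R^2 < H2" by (rule mult_less_cancel_left_pos[OF R2])
    finally show ?thesis .
  qed
  have p1: "H2 < R^2 \<longleftrightarrow> dA * dB * dC > 0"
  proof -
    have "H2 < R^2 \<longleftrightarrow> (R^2 - H2) * P > 0" using P by (simp add: zero_less_mult_iff)
    also have "\<dots> \<longleftrightarrow> dA * dB * dC > 0" unfolding id using R2 by (simp add: zero_less_mult_iff)
    finally show ?thesis .
  qed
  have p2: "R^2 < H2 \<longleftrightarrow> dA * dB * dC < 0"
  proof -
    have "R^2 < H2 \<longleftrightarrow> (R^2 - H2) * P < 0" using P by (simp add: mult_less_0_iff)
    also have "\<dots> \<longleftrightarrow> dA * dB * dC < 0" unfolding id using R2 by (simp add: mult_less_0_iff)
    finally show ?thesis .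
  qed
  have q1: "dA * dB * dC > 0 \<longleftrightarrow> (dA > 0 \<and> dB > 0 \<and> dC > 0)"
    using s1 s2 s3 by (auto simp: zero_less_mult_iff mult_less_0_iff)
  have q2: "dA * dB * dC < 0 \<longleftrightarrow> (dA < 0 \<or> dB < 0 \<or> dC < 0)"
    using s1 s2 s3 by (auto simp: zero_less_mult_iff mult_less_0_iff)
  show ?thesis using gt lt g1 g2 p1 p2 q1 q2 by blast
qed

lemma circ_coord:
  fixes P Oc :: point
  assumes "R = dist Oc P"
  shows "(P$1 - Oc$1)^2 + (P$2 - Oc$2)^2 = R^2"
proof -
  have "R^2 = (norm (P - Oc))^2" using assms by (simp add: dist_norm norm_minus_commute)
  also have "\<dots> = (P - Oc)\<bullet>(P - Oc)" by (rule power2_norm_eq_inner)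
  also have "\<dots> = (P$1 - Oc$1)^2 + (P$2 - Oc$2)^2" by (simp add: inner2 power2_eq_square)
  finally show ?thesis by simp
qed

lemma dist_coord_pos:
  fixes P Q Oc :: point
  assumes "P \<noteq> Q"
  shows "((Q$1-Oc$1)-(P$1-Oc$1))^2 + ((Q$2-Oc$2)-(P$2-Oc$2))^2 > 0"
proof -
  have ne: "(Q$1-P$1)^2 + (Q$2-P$2)^2 \<noteq> 0"
  proof
    assume "(Q$1-P$1)^2 + (Q$2-P$2)^2 = 0"
    then have "Q$1 = P$1" "Q$2 = P$2" by (simp_all add: sum_power2_eq_zero_iff)
    then have "P = Q" by (simp add: vec_eq_iff forall_2)
    with assms show False by simp
  qed
  have ge: "0 \<le> (Q$1-P$1)^2 + (Q$2-P$2)^2" by simp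
  have "0 < (Q$1-P$1)^2 + (Q$2-P$2)^2" by (rule order_le_neq_trans[OF ge ne[symmetric]])
  moreover have "(Q$1-Oc$1)-(P$1-Oc$1) = Q$1-P$1" "(Q$2-Oc$2)-(P$2-Oc$2) = Q$2-P$2" by simp_all
  ultimately show ?thesis by simp
qed

lemma pair_sums:
  fixes xa ya xb yb xc yc :: real
  shows "((xb-xa) * (xc-xa)+(yb-ya) * (yc-ya)) + ((xa-xb) * (xc-xb)+(ya-yb) * (yc-yb)) = (xb-xa)^2+(yb-ya)^2"
    and "((xa-xb) * (xc-xb)+(ya-yb) * (yc-yb)) + ((xa-xc) * (xb-xc)+(ya-yc) * (yb-yc)) = (xc-xb)^2+(yc-yb)^2"
    and "((xb-xa) * (xc-xa)+(yb-ya) * (yc-ya)) + ((xa-xc) * (xb-xc)+(ya-yc) * (yb-yc)) = (xa-xc)^2+(ya-yc)^2"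
  by (simp_all add: algebra_simps power2_eq_square)

theorem corollary2p1:
  fixes A B C Oc F1 F2 :: point and a R :: real
  assumes "nondegenerate_triangle A B C"
    and "dist F1 F2 < 2 * a"
    and "circumscribed_about A B C (ellipse F1 F2 a)"
    and "is_circumcenter Oc A B C"
    and "R = dist Oc A"
    and "ellipse_center F1 F2 = Oc"
  shows "(acute_triangle A B C \<longleftrightarrow> R > linear_eccentricity F1 F2) \<and>
         (obtuse_triangle A B C \<longleftrightarrow> R < linear_eccentricity F1 F2)"
proof -
  have nc: "\<not> collinear {A,B,C}" using assms(1) unfolding nondegenerate_triangle_def .
  have AB: "A \<noteq> B" using nc by auto
  have BC: "B \<noteq> C" using nc by auto
  have CA: "C \<noteq> A" using nc by (auto simp: insert_commute)
  define f where "f = F1 - Oc"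
  have mid: "Oc = midpoint F1 F2" using assms(6) unfolding ellipse_center_def by simp
  have F1e: "F1 = Oc + f" unfolding f_def by simp
  have F2e: "F2 = Oc - f"
    unfolding f_def mid by (simp add: vec_eq_iff midpoint_def field_simps)
  have ff: "F1 - F2 = 2 *\<^sub>R f" unfolding F1e F2e by (simp add: scaleR_2)
  have le: "linear_eccentricity F1 F2 = norm f"
    unfolding linear_eccentricity_def dist_norm ff by simp
  have af: "norm f < a" using assms(2) unfolding dist_norm ff by simp
  have E: "ellipse F1 F2 a = ellipse (Oc+f) (Oc-f) a" using F1e F2e by simp
  have tAB: "tangent_line (line_through A B) (ellipse (Oc+f) (Oc-f) a)"
    and tBC: "tangent_line (line_through B C) (ellipse (Oc+f) (Oc-f) a)"
    and tCA: "tangent_line (line_through C A) (ellipse (Oc+f) (Oc-f) a)"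
    using assms(3) unfolding circumscribed_about_def E by auto
  note T12 = tangent_T[OF af AB tAB, unfolded inner2 vector_minus_component]
  note T23 = tangent_T[OF af BC tBC, unfolded inner2 vector_minus_component]
  note T31 = tangent_T[OF af CA tCA, unfolded inner2 vector_minus_component]
  have RB: "R = dist Oc B" and RC: "R = dist Oc C"
    using assms(4,5) unfolding is_circumcenter_def by simp_all
  note c1 = circ_coord[OF assms(5)]
  note c2 = circ_coord[OF RB]
  note c3 = circ_coord[OF RC]
  have "(B$1-A$1) * (C$2-A$2) - (B$2-A$2) * (C$1-A$1) \<noteq> 0" by (rule cross_ne[OF nc])
  moreover have "((B$1-Oc$1)-(A$1-Oc$1)) * ((C$2-Oc$2)-(A$2-Oc$2)) - ((B$2-Oc$2)-(A$2-Oc$2)) * ((C$1-Oc$1)-(A$1-Oc$1))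
      = (B$1-A$1) * (C$2-A$2) - (B$2-A$2) * (C$1-A$1)" by simp
  ultimately have cr: "((B$1-Oc$1)-(A$1-Oc$1)) * ((C$2-Oc$2)-(A$2-Oc$2)) - ((B$2-Oc$2)-(A$2-Oc$2)) * ((C$1-Oc$1)-(A$1-Oc$1)) \<noteq> 0"
    by simp
  have R0: "R \<ge> 0" using assms(5) by simp
  have "R \<noteq> 0"
  proof
    assume "R = 0"
    then have "A = Oc" "B = Oc" using assms(5) RB by simp_all
    with AB show False by simp
  qed
  with R0 have Rp: "R > 0" by simp
  then have rpos: "R^2 > 0" by simp
  note K = core[OF c1 c2 c3 T12 T23 T31 cr rpos]
  have nf: "(norm f)^2 = f$1 * f$1 + f$2 * f$2" by (simp add: power2_norm_eq_inner inner2)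
  have cc: "((norm f)^2)^2 = R^2 * (((A$1-Oc$1)+(B$1-Oc$1)+(C$1-Oc$1))^2+((A$2-Oc$2)+(B$2-Oc$2)+(C$2-Oc$2))^2)"
    unfolding nf by (rule K)
  note S = sgn_id[OF c1 c2 c3]
  note PS = pair_sums[where xa="A$1-Oc$1" and ya="A$2-Oc$2" and xb="B$1-Oc$1" and yb="B$2-Oc$2" and xc="C$1-Oc$1" and yc="C$2-Oc$2"]
  have p12: "((B$1-Oc$1)-(A$1-Oc$1))^2 + ((B$2-Oc$2)-(A$2-Oc$2))^2 > 0" by (rule dist_coord_pos[OF AB])
  have p23: "((C$1-Oc$1)-(B$1-Oc$1))^2 + ((C$2-Oc$2)-(B$2-Oc$2))^2 > 0" by (rule dist_coord_pos[OF BC])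
  have p31: "((A$1-Oc$1)-(C$1-Oc$1))^2 + ((A$2-Oc$2)-(C$2-Oc$2))^2 > 0" by (rule dist_coord_pos[OF CA])
  have Pp: "(((B$1-Oc$1)-(A$1-Oc$1))^2 + ((B$2-Oc$2)-(A$2-Oc$2))^2) * (((C$1-Oc$1)-(B$1-Oc$1))^2 + ((C$2-Oc$2)-(B$2-Oc$2))^2) * (((A$1-Oc$1)-(C$1-Oc$1))^2 + ((A$2-Oc$2)-(C$2-Oc$2))^2) > 0"
    using p12 p23 p31 by simp
  have s1: "(((B$1-Oc$1)-(A$1-Oc$1)) * ((C$1-Oc$1)-(A$1-Oc$1))+((B$2-Oc$2)-(A$2-Oc$2)) * ((C$2-Oc$2)-(A$2-Oc$2)))
          + (((A$1-Oc$1)-(B$1-Oc$1)) * ((C$1-Oc$1)-(B$1-Oc$1))+((A$2-Oc$2)-(B$2-Oc$2)) * ((C$2-Oc$2)-(B$2-Oc$2))) > 0"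
    using PS(1) p12 by simp
  have s2: "(((A$1-Oc$1)-(B$1-Oc$1)) * ((C$1-Oc$1)-(B$1-Oc$1))+((A$2-Oc$2)-(B$2-Oc$2)) * ((C$2-Oc$2)-(B$2-Oc$2)))
          + (((A$1-Oc$1)-(C$1-Oc$1)) * ((B$1-Oc$1)-(C$1-Oc$1))+((A$2-Oc$2)-(C$2-Oc$2)) * ((B$2-Oc$2)-(C$2-Oc$2))) > 0"
    using PS(2) p23 by simp
  have s3: "(((B$1-Oc$1)-(A$1-Oc$1)) * ((C$1-Oc$1)-(A$1-Oc$1))+((B$2-Oc$2)-(A$2-Oc$2)) * ((C$2-Oc$2)-(A$2-Oc$2)))
          + (((A$1-Oc$1)-(C$1-Oc$1)) * ((B$1-Oc$1)-(C$1-Oc$1))+((A$2-Oc$2)-(C$2-Oc$2)) * ((B$2-Oc$2)-(C$2-Oc$2))) > 0"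
    using PS(3) p31 by simp
  note FS = final_scalar[OF Rp norm_ge_zero cc Pp S s1 s2 s3]
  have dA: "(B - A)\<bullet>(C - A) = ((B$1-Oc$1)-(A$1-Oc$1)) * ((C$1-Oc$1)-(A$1-Oc$1))+((B$2-Oc$2)-(A$2-Oc$2)) * ((C$2-Oc$2)-(A$2-Oc$2))"
    by (simp add: inner2)
  have dB: "(A - B)\<bullet>(C - B) = ((A$1-Oc$1)-(B$1-Oc$1)) * ((C$1-Oc$1)-(B$1-Oc$1))+((A$2-Oc$2)-(B$2-Oc$2)) * ((C$2-Oc$2)-(B$2-Oc$2))"
    by (simp add: inner2)
  have dC: "(A - C)\<bullet>(B - C) = ((A$1-Oc$1)-(C$1-Oc$1)) * ((B$1-Oc$1)-(C$1-Oc$1))+((A$2-Oc$2)-(C$2-Oc$2)) * ((B$2-Oc$2)-(C$2-Oc$2))"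
    by (simp add: inner2)
  have nz: "B - A \<noteq> 0" "C - A \<noteq> 0" "A - B \<noteq> 0" "C - B \<noteq> 0" "A - C \<noteq> 0" "B - C \<noteq> 0"
    using AB BC CA by auto
  have acute: "acute_triangle A B C \<longleftrightarrow> (B - A)\<bullet>(C - A) > 0 \<and> (A - B)\<bullet>(C - B) > 0 \<and> (A - C)\<bullet>(B - C) > 0"
    unfolding acute_triangle_def vertex_angle_def
    using ang_iff(1)[OF nz(1,2)] ang_iff(1)[OF nz(3,4)] ang_iff(1)[OF nz(5,6)] by simp
  have obtuse: "obtuse_triangle A B C \<longleftrightarrow> (B - A)\<bullet>(C - A) < 0 \<or> (A - B)\<bullet>(C - B) < 0 \<or> (A - C)\<bullet>(B - C) < 0"
    unfolding obtuse_triangle_def vertex_angle_def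
    using ang_iff(2)[OF nz(1,2)] ang_iff(2)[OF nz(3,4)] ang_iff(2)[OF nz(5,6)] by simp
  show ?thesis unfolding acute obtuse le dA dB dC using FS by simp
qed

end
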